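(* Consider the plant $\dot x=f(x,z,u)$, $\epsilon\dot z=g(x,z,u)$ with feedback $u=k(x+e)$, and suppose: (1) $f$, $g$ and $k$ are globally Lipschitz; (2) Assumption A1 holds and the selected root $h$ is globally Lipschitz; (3) there exist symmetric positive definite matrices $P_1\in\mathbb{R}^{n_x\times n_x}$, $P_2\in\mathbb{R}^{n_y\times n_y}$ and constants $\bar\alpha_1,\alpha_2>0$ such that $V_x(x):=x^TP_1x$ and $V_y(x,y):=y^TP_2y$ satisfy, for all $(x,y,e)$, $$\tfrac{\partial V_x}{\partial x}f_s(x,0)\le-\bar\alpha_1V_x(x),\qquad \tfrac{\partial V_y}{\partial y}g_f(x,y,e)\le-\alpha_2V_y(x,y).$$ Then Assumptions A2, A3, A4, A5 and A6 are satisfied (with these $V_x,V_y$, with $\alpha_1=\bar\alpha_1/2$, and with $\gamma_1(s)=\bar\gamma_1s^2$, $\gamma_2(s)=\bar\gamma_2s^2$ for some constants $\bar\gamma_1,\bar\gamma_2\ge0$).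
   Context: Plant: $f:\mathbb{R}^{n_x}\times\mathbb{R}^{n_z}\times\mathbb{R}^{n_u}\to\mathbb{R}^{n_x}$, $g:\mathbb{R}^{n_x}\times\mathbb{R}^{n_z}\times\mathbb{R}^{n_u}\to\mathbb{R}^{n_z}$, $\epsilon>0$, $k:\mathbb{R}^{n_x}\to\mathbb{R}^{n_u}$; $n_y:=n_z$; $|\cdot|$ is the Euclidean norm (induced norm for matrices); $\mathcal{K}_\infty$ denotes continuous, zero-at-zero, strictly increasing, unbounded functions $\mathbb{R}_{\ge0}\to\mathbb{R}_{\ge0}$. Assumption A1: $g(x,z,u)=0$ has $n\ge1$ isolated real roots $z=h_i(x,u)$, each continuously differentiable; one root is fixed and denoted $h$. With $\frac{\partial h}{\partial x}$ the Jacobian of $h$ in its first argument at $(x,k(x+e))$ define: $f_x(x,y,e):=f(x,y+h(x,k(x+e)),k(x+e))$, $h_y(x,y,e):=y+h(x,k(x+e))-h(x,k(x))$, $f_s(x,e):=f(x,h(x,k(x+e)),k(x+e))$, $g_f(x,y,e):=g(x,y+h(x,k(x+e)),k(x+e))$. Assumption A2: there exist a $C^1$ function $V_x:\mathbb{R}^{n_x}\to\mathbb{R}_{\ge0}$, $\underline\alpha_x,\overline\alpha_x,\gamma_1\in\mathcal{K}_\infty$ ($\gamma_1$ continuously differentiable) and $\alpha_1>0$ with $\underline\alpha_x(|x|)\le V_x(x)\le\overline\alpha_x(|x|)$ and $\frac{\partial V_x}{\partial x}f_s(x,e)\le-\alpha_1V_x(x)+\gamma_1(|e|)$ for all $(x,e)$.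 Assumption A3: there exist a $C^1$ function $V_y:\mathbb{R}^{n_x}\times\mathbb{R}^{n_y}\to\mathbb{R}_{\ge0}$, $\underline\alpha_y,\overline\alpha_y\in\mathcal{K}_\infty$, $\alpha_2>0$ with $\underline\alpha_y(|y|)\le V_y(x,y)\le\overline\alpha_y(|y|)$ and $\frac{\partial V_y}{\partial y}g_f(x,y,e)\le-\alpha_2V_y(x,y)$ for all $(x,y,e)$. Assumption A4: there exist $\gamma_2\in\mathcal{K}_\infty$ and $\beta_1,\beta_2,\beta_3>0$ with, for all $(x,y,e)$, $\frac{\partial V_x}{\partial x}[f_x(x,y,e)-f_s(x,e)]\le\beta_1\sqrt{V_x(x)V_y(x,y)}$ and $[\frac{\partial V_y}{\partial x}-\frac{\partial V_y}{\partial y}\frac{\partial h}{\partial x}]f_x(x,y,e)\le\beta_2\sqrt{V_x(x)V_y(x,y)}+\beta_3V_y(x,y)+\gamma_2(|e|)$; and there is $L>0$ with $\gamma_2\circ\gamma_1^{-1}(s)\le Ls$ for all $s\ge0$. Assumption A5: there exist $\lambda_1,\lambda_2>0$ with $V_y(x,h_y(x,y,e))\le V_y(x,y)+\lambda_1\gamma_1(|e|)+\lambda_2\sqrt{\gamma_1(|e|)V_y(x,y)}$ for all $(x,y,e)$. Assumption A6: there exist $M,N\ge0$ such that for all $(x,y)$ and almost all $e$: $\langle\nabla|e|,-f_x(x,y,e)\rangle\le M|e|+N(\sqrt{V_x(x)}+\sqrt{V_y(x,y)})$. *)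

theory Defs
  imports "HOL-Analysis.Analysis"
begin

text \<open>Class K-infinity: functions on the nonnegative reals that are continuous,
  zero at zero, strictly increasing and unbounded.\<close>
definition Kinf :: "(real \<Rightarrow> real) \<Rightarrow> bool" where
  "Kinf a \<longleftrightarrow> continuous_on {0..} a \<and> a 0 = 0 \<and> strict_mono_on {0..} a
     \<and> (\<forall>M. \<exists>s\<ge>0. M < a s)"

text \<open>Continuously differentiable (C1) on the whole space.\<close>
definition C1 :: "('a::real_normed_vector \<Rightarrow> 'b::real_normed_vector) \<Rightarrow> bool" where
  "C1 F \<longleftrightarrow> (\<exists>F'. (\<forall>p. (F has_derivative blinfun_apply (F' p)) (at p)) \<and> continuous_on UNIV F')"

text \<open>Globally Lipschitz.\<close>
definition glob_lipschitz :: "('a::metric_space \<Rightarrow> 'b::metric_space) \<Rightarrow> bool" where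
  "glob_lipschitz F \<longleftrightarrow> (\<exists>C. C-lipschitz_on UNIV F)"

text \<open>Quadratic form x^T P x.\<close>
definition quadf :: "real^'n^'n \<Rightarrow> real^'n \<Rightarrow> real" where
  "quadf P x = x \<bullet> (P *v x)"

definition sym_pos_def_mat :: "real^'n^'n \<Rightarrow> bool" where
  "sym_pos_def_mat P \<longleftrightarrow> transpose P = P \<and> (\<forall>x. x \<noteq> 0 \<longrightarrow> 0 < x \<bullet> (P *v x))"

text \<open>Assumption A1 for the selected root h.\<close>
definition A1 :: "('x::real_normed_vector \<Rightarrow> 'z::real_normed_vector \<Rightarrow> 'u::real_normed_vector \<Rightarrow> 'z)
     \<Rightarrow> ('x \<Rightarrow> 'u \<Rightarrow> 'z) \<Rightarrow> bool" where
  "A1 g h \<longleftrightarrow> (\<exists>n::nat. n \<ge> 1 \<and> (\<exists>hs :: nat \<Rightarrow> 'x \<Rightarrow> 'u \<Rightarrow> 'z.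
       (\<forall>i<n. C1 (\<lambda>(x, u). hs i x u))
     \<and> (\<forall>x u. {z. g x z u = 0} = (\<lambda>i. hs i x u) ` {..<n} \<and> inj_on (\<lambda>i. hs i x u) {..<n})
     \<and> (\<exists>i<n. h = hs i)))"

text \<open>Auxiliary functions.\<close>
definition fx_fun where
  "fx_fun f h k x y e = f x (y + h x (k (x + e))) (k (x + e))"
definition hy_fun where
  "hy_fun h k x y e = y + h x (k (x + e)) - h x (k x)"
definition fs_fun where
  "fs_fun f h k x e = f x (h x (k (x + e))) (k (x + e))"
definition gf_fun where
  "gf_fun g h k x y e = g x (y + h x (k (x + e))) (k (x + e))"

definition A2 where
  "A2 f h k Vx \<alpha>1 \<gamma>1 \<longleftrightarrow> C1 Vx
     \<and> (\<exists>la ua. Kinf la \<and> Kinf ua \<and> (\<forall>x. la (norm x) \<le> Vx x \<and> Vx x \<le> ua (norm x)))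
     \<and> Kinf \<gamma>1 \<and> C1 \<gamma>1 \<and> \<alpha>1 > 0
     \<and> (\<forall>x e. frechet_derivative Vx (at x) (fs_fun f h k x e) \<le> - \<alpha>1 * Vx x + \<gamma>1 (norm e))"

definition A3 where
  "A3 g h k Vy \<longleftrightarrow> C1 (\<lambda>(x, y). Vy x y)
     \<and> (\<exists>la ua \<alpha>2. Kinf la \<and> Kinf ua \<and> \<alpha>2 > 0
        \<and> (\<forall>x y. la (norm y) \<le> Vy x y \<and> Vy x y \<le> ua (norm y))
        \<and> (\<forall>x y e. frechet_derivative (\<lambda>y'. Vy x y') (at y) (gf_fun g h k x y e) \<le> - \<alpha>2 * Vy x y))"

definition A4 where
  "A4 f h k Vx Vy \<gamma>1 \<gamma>2 \<longleftrightarrow> Kinf \<gamma>2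
     \<and> (\<exists>\<beta>1 \<beta>2 \<beta>3. \<beta>1 > 0 \<and> \<beta>2 > 0 \<and> \<beta>3 > 0 \<and> (\<forall>x y e.
          frechet_derivative Vx (at x) (fx_fun f h k x y e - fs_fun f h k x e)
            \<le> \<beta>1 * sqrt (Vx x * Vy x y)
        \<and> frechet_derivative (\<lambda>x'. Vy x' y) (at x) (fx_fun f h k x y e)
          - frechet_derivative (\<lambda>y'. Vy x y') (at y)
              (frechet_derivative (\<lambda>x'. h x' (k (x + e))) (at x) (fx_fun f h k x y e))
            \<le> \<beta>2 * sqrt (Vx x * Vy x y) + \<beta>3 * Vy x y + \<gamma>2 (norm e)))
     \<and> (\<exists>L>0. \<forall>s\<ge>0. \<gamma>2 (inv_into {0..} \<gamma>1 s) \<le> L * s)"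

definition A5 where
  "A5 h k Vy \<gamma>1 \<longleftrightarrow> (\<exists>lam1 lam2. lam1 > 0 \<and> lam2 > 0 \<and> (\<forall>x y e.
      Vy x (hy_fun h k x y e) \<le> Vy x y + lam1 * \<gamma>1 (norm e) + lam2 * sqrt (\<gamma>1 (norm e) * Vy x y)))"

definition A6 where
  "A6 f h k Vx Vy \<longleftrightarrow> (\<exists>M\<ge>0. \<exists>N\<ge>0. \<forall>x y. AE e in lborel.
      \<forall>D. (norm has_derivative D) (at e) \<longrightarrow>
        D (- fx_fun f h k x y e) \<le> M * norm e + N * (sqrt (Vx x) + sqrt (Vy x y)))"

end

theory Submission
  imports Defs
begin


lemma mat_bound: "\<exists>B>0. \<forall>x. norm ((P::real^'n^'m) *v x) \<le> B * norm x"
proof -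
  obtain B where "B>0" "\<And>x. norm (P *v x) \<le> B * norm x"
    using linear_bounded_pos[OF matrix_vector_mul_linear[of P]] by blast
  thus ?thesis by blast
qed

lemma inner_mat_bound: "\<exists>B>0. \<forall>v w. \<bar>v \<bullet> ((P::real^'n^'n) *v w)\<bar> \<le> B * norm v * norm w"
proof -
  obtain B where B: "B>0" "\<And>x. norm (P *v x) \<le> B * norm x" using mat_bound by blast
  have "\<bar>v \<bullet> (P *v w)\<bar> \<le> B * norm v * norm w" for v w
  proof -
    have "\<bar>v \<bullet> (P *v w)\<bar> \<le> norm v * norm (P *v w)" by (rule Cauchy_Schwarz_ineq2)
    also have "\<dots> \<le> norm v * (B * norm w)" using B(2) by (simp add: mult_left_mono)
    finally show ?thesis by (simp add: mult_ac)
  qed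
  thus ?thesis using B by blast
qed

lemma quadf_scale: "quadf P (a *\<^sub>R x) = a^2 * quadf P x"
  by (simp add: quadf_def matrix_vector_mult_scaleR power2_eq_square)

lemma quadf_lower:
  assumes "sym_pos_def_mat (P::real^'n^'n)"
  shows "\<exists>c>0. \<forall>x. c * (norm x)^2 \<le> quadf P x"
proof -
  have cont: "continuous_on UNIV (quadf P)"
    unfolding quadf_def by (intro continuous_intros)
  obtain b :: "real^'n" where b: "b \<in> Basis" using nonempty_Basis by blast
  have ne: "sphere (0::real^'n) 1 \<noteq> {}" using b by (auto simp: norm_Basis)
  obtain u where u: "u \<in> sphere 0 1" "\<And>y. y \<in> sphere 0 1 \<Longrightarrow> quadf P u \<le> quadf P y"
    using continuous_attains_inf[OF compact_sphere ne continuous_on_subset[OF cont]] by blast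
  have "u \<noteq> 0" using u(1) by auto
  hence upos: "quadf P u > 0" using assms by (auto simp: sym_pos_def_mat_def quadf_def)
  have "quadf P u * (norm x)^2 \<le> quadf P x" for x
  proof (cases "x = 0")
    case True thus ?thesis by (simp add: quadf_def)
  next
    case False
    have s: "(1/norm x) *\<^sub>R x \<in> sphere 0 1" using False by auto
    have "x = norm x *\<^sub>R ((1/norm x) *\<^sub>R x)" using False by simp
    hence "quadf P x = (norm x)^2 * quadf P ((1/norm x) *\<^sub>R x)" by (metis quadf_scale)
    thus ?thesis using u(2)[OF s] by (metis mult.commute mult_left_mono zero_le_power2)
  qed
  thus ?thesis using upos by blast
qed

lemma quadf_upper: "\<exists>C>0. \<forall>x. \<bar>quadf (P::real^'n^'n) x\<bar> \<le> C * (norm x)^2"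
  using inner_mat_bound[of P] by (auto simp: quadf_def power2_eq_square mult_ac)

lemma quadf_deriv: "(quadf P has_derivative (\<lambda>v. v \<bullet> (P *v x) + x \<bullet> (P *v v))) (at x)"
  unfolding quadf_def
  by (auto intro!: derivative_eq_intros bounded_linear.has_derivative[OF matrix_vector_mul_bounded_linear] simp: matrix_vector_mult_diff_distrib)

lemma C1I:
  fixes F :: "'a::real_normed_vector \<Rightarrow> 'b::real_normed_vector"
  assumes d: "\<And>p. (F has_derivative D p) (at p)"
    and L: "\<And>p q v. norm (D p v - D q v) \<le> L * norm (p - q) * norm v"
  shows "C1 F"
proof -
  have bl: "bounded_linear (D p)" for p using d has_derivative_bounded_linear by blast
  define F' where "F' p = Blinfun (D p)" for p
  have ap: "blinfun_apply (F' p) = D p" for p using bl by (simp add: F'_def bounded_linear_Blinfun_apply)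
  have nb: "norm (F' p - F' q) \<le> \<bar>L\<bar> * norm (p - q)" for p q
    apply (rule norm_blinfun_bound)
     apply simp
    apply (simp add: blinfun.diff_left ap)
  proof -
    fix v :: 'a
    have "L * norm (p-q) * norm v \<le> \<bar>L\<bar> * norm(p-q) * norm v" by (intro mult_right_mono) auto
    thus "norm (D p v - D q v) \<le> \<bar>L\<bar> * norm (p - q) * norm v" using L[where p=p and q=q and v=v] by linarith
  qed
  have "continuous_on UNIV F'"
  proof (rule continuous_at_imp_continuous_on, intro ballI)
    fix p show "isCont F' p"
      unfolding continuous_at_eps_delta
    proof (intro allI impI)
      fix e :: real assume e: "e > 0"
      show "\<exists>d>0. \<forall>q. dist q p < d \<longrightarrow> dist (F' q) (F' p) < e"
      proof (intro exI[of _ "e / (\<bar>L\<bar> + 1)"] conjI allI impI)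
        show "e / (\<bar>L\<bar> + 1) > 0" using e by simp
        fix q assume "dist q p < e / (\<bar>L\<bar> + 1)"
        hence "norm (q - p) * (\<bar>L\<bar> + 1) < e" by (simp add: dist_norm field_simps)
        moreover have "dist (F' q) (F' p) \<le> \<bar>L\<bar> * norm (q - p)" using nb by (simp add: dist_norm)
        moreover have "\<bar>L\<bar> * norm (q - p) \<le> norm (q - p) * (\<bar>L\<bar> + 1)" by (simp add: algebra_simps)
        ultimately show "dist (F' q) (F' p) < e" by linarith
      qed
    qed
  qed
  thus ?thesis unfolding C1_def using d ap by metis
qed



lemma fd_quadf: "frechet_derivative (quadf P) (at x) = (\<lambda>v. v \<bullet> (P *v x) + x \<bullet> (P *v v))"
  using frechet_derivative_at[OF quadf_deriv] by metis

lemma quadf_diffbound: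
  "\<exists>B>0. \<forall>v w. \<bar>v \<bullet> ((P::real^'n^'n) *v w)\<bar> \<le> B * norm v * norm w \<and> \<bar>quadf P v\<bar> \<le> B * (norm v)^2"
  using inner_mat_bound[of P] by (auto simp: quadf_def power2_eq_square mult_ac)

lemma C1_quadf: "C1 (quadf (P::real^'n^'n))"
proof -
  obtain B where B: "B>0" "\<And>v w. \<bar>v \<bullet> (P *v w)\<bar> \<le> B * norm v * norm w" using inner_mat_bound by blast
  show ?thesis
  proof (rule C1I[OF quadf_deriv, where L="2*B"])
    fix p q v :: "real^'n"
    have e: "(v \<bullet> (P *v p) + p \<bullet> (P *v v)) - (v \<bullet> (P *v q) + q \<bullet> (P *v v))
       = v \<bullet> (P *v (p - q)) + (p - q) \<bullet> (P *v v)"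
      by (simp add: matrix_vector_mult_diff_distrib inner_diff_left inner_diff_right)
    have "\<bar>v \<bullet> (P *v (p - q))\<bar> \<le> B * norm v * norm (p-q)" "\<bar>(p - q) \<bullet> (P *v v)\<bar> \<le> B * norm (p-q) * norm v"
      using B by auto
    thus "norm ((v \<bullet> (P *v p) + p \<bullet> (P *v v)) - (v \<bullet> (P *v q) + q \<bullet> (P *v v))) \<le> 2 * B * norm (p - q) * norm v"
      unfolding e real_norm_def by (simp add: algebra_simps)
  qed
qed



lemma C1_quadf_snd: "C1 (\<lambda>(x::'a::real_normed_vector, y). quadf (P::real^'n^'n) y)"
proof -
  obtain B where B: "B>0" "\<And>v w. \<bar>v \<bullet> (P *v w)\<bar> \<le> B * norm v * norm w" using inner_mat_bound by blast
  have eq: "(\<lambda>(x::'a, y). quadf P y) = (\<lambda>p. quadf P (snd p))" by auto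
  show ?thesis unfolding eq
  proof (rule C1I[where D="\<lambda>p v. snd v \<bullet> (P *v snd p) + snd p \<bullet> (P *v snd v)" and L="2*B"])
    fix p :: "'a \<times> (real^'n)"
    show "((\<lambda>p. quadf P (snd p)) has_derivative (\<lambda>v. snd v \<bullet> (P *v snd p) + snd p \<bullet> (P *v snd v))) (at p)"
      by (rule has_derivative_compose[OF has_derivative_snd[OF has_derivative_ident] quadf_deriv])
  next
    fix p q v :: "'a \<times> (real^'n)"
    have e: "(snd v \<bullet> (P *v snd p) + snd p \<bullet> (P *v snd v)) - (snd v \<bullet> (P *v snd q) + snd q \<bullet> (P *v snd v))
       = snd v \<bullet> (P *v (snd p - snd q)) + (snd p - snd q) \<bullet> (P *v snd v)"
      by (simp add: matrix_vector_mult_diff_distrib inner_diff_left inner_diff_right)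
    have n1: "norm (snd p - snd q) \<le> norm (p - q)" using norm_snd_le[of "snd (p - q)" "fst (p - q)", unfolded prod.collapse] by (simp only: snd_diff)
    have n2: "norm (snd v) \<le> norm v" using norm_snd_le[of "snd v" "fst v", unfolded prod.collapse] .
    have "\<bar>snd v \<bullet> (P *v (snd p - snd q))\<bar> \<le> B * norm (snd v) * norm (snd p - snd q)"
         "\<bar>(snd p - snd q) \<bullet> (P *v snd v)\<bar> \<le> B * norm (snd p - snd q) * norm (snd v)"
      using B by auto
    moreover have "norm (snd v) * norm (snd p - snd q) \<le> norm v * norm (p - q)"
      by (rule mult_mono[OF n2 n1]) auto
    hence "B * (norm (snd v) * norm (snd p - snd q)) \<le> B * (norm v * norm (p - q))"
      using B(1) by (intro mult_left_mono) auto
    hence "B * norm (snd v) * norm (snd p - snd q) \<le> B * norm (p - q) * norm v"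
          "B * norm (snd p - snd q) * norm (snd v) \<le> B * norm (p - q) * norm v"
      by (simp_all add: mult_ac)
    moreover have "\<bar>snd v \<bullet> (P *v (snd p - snd q)) + (snd p - snd q) \<bullet> (P *v snd v)\<bar>
      \<le> \<bar>snd v \<bullet> (P *v (snd p - snd q))\<bar> + \<bar>(snd p - snd q) \<bullet> (P *v snd v)\<bar>" by (rule abs_triangle_ineq)
    ultimately show "norm ((snd v \<bullet> (P *v snd p) + snd p \<bullet> (P *v snd v)) - (snd v \<bullet> (P *v snd q) + snd q \<bullet> (P *v snd v))) \<le> 2 * B * norm (p - q) * norm v"
      unfolding e real_norm_def by linarith
  qed
qed



lemma C1_sq: "C1 (\<lambda>s::real. c * s^2)"
proof (rule C1I[where D="\<lambda>p v. 2 * c * p * v" and L="2*\<bar>c\<bar>"])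
  fix p :: real
  show "((\<lambda>s. c * s^2) has_derivative (\<lambda>v. 2 * c * p * v)) (at p)"
    by (auto intro!: derivative_eq_intros simp: power2_eq_square)
next
  fix p q v :: real
  show "norm (2 * c * p * v - 2 * c * q * v) \<le> 2 * \<bar>c\<bar> * norm (p - q) * norm v"
  proof -
    have "2 * c * p * v - 2 * c * q * v = 2 * c * (p - q) * v" by (simp add: algebra_simps)
    thus ?thesis by (simp add: abs_mult)
  qed
qed

lemma Kinf_sq: "c > 0 \<Longrightarrow> Kinf (\<lambda>s. c * s^2)"
  unfolding Kinf_def
proof (intro conjI allI)
  assume c: "c > 0"
  show "continuous_on {0..} (\<lambda>s. c * s^2)" by (intro continuous_intros)
  show "c * 0^2 = 0" by simp
  show "strict_mono_on {0..} (\<lambda>s. c * s^2)"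
  proof (rule strict_mono_onI)
    fix r s :: real assume "r \<in> {0..}" "s \<in> {0..}" "r < s"
    hence "r^2 < s^2" by (intro power_strict_mono) auto
    thus "c * r^2 < c * s^2" using c by simp
  qed
  fix M :: real
  show "\<exists>s\<ge>0. M < c * s^2"
  proof (intro exI[of _ "\<bar>M\<bar>/c + 1"] conjI)
    show "0 \<le> \<bar>M\<bar>/c + 1" using c by simp
    have "1 \<le> \<bar>M\<bar>/c + 1" using c by simp
    hence "1 * (\<bar>M\<bar>/c + 1) \<le> (\<bar>M\<bar>/c + 1) * (\<bar>M\<bar>/c + 1)"
      by (intro mult_right_mono) auto
    hence "\<bar>M\<bar>/c + 1 \<le> (\<bar>M\<bar>/c + 1)^2" by (simp add: power2_eq_square)
    hence "c * (\<bar>M\<bar>/c + 1) \<le> c * (\<bar>M\<bar>/c + 1)^2" using c by (intro mult_left_mono) auto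
    moreover have "c * (\<bar>M\<bar>/c + 1) = \<bar>M\<bar> + c" using c by (simp add: field_simps)
    ultimately show "M < c * (\<bar>M\<bar>/c + 1)^2" using c by linarith
  qed
qed

lemma amgm:
  fixes s a b :: real
  assumes s: "s > 0"
  shows "a * b \<le> s * a^2 + b^2 / (4 * s)"
proof -
  have "0 \<le> (2 * s * a - b)^2" by simp
  hence "4 * s * (a*b) \<le> 4 * s * (s * a^2) + b^2" by (simp add: power2_eq_square algebra_simps)
  also have "\<dots> = 4 * s * (s * a^2 + b^2 / (4 * s))" using s by (simp add: field_simps)
  finally show ?thesis using s by simp
qed



lemma deriv_lip_bound:
  fixes F :: "'a::real_normed_vector \<Rightarrow> 'b::real_normed_vector"
  assumes d: "(F has_derivative D) (at x)" and L: "C-lipschitz_on UNIV F"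
  shows "norm (D v) \<le> C * norm v"
proof (rule ccontr)
  assume nc: "\<not> ?thesis"
  have C0: "C \<ge> 0" using lipschitz_on_nonneg[OF L] .
  have bl: "bounded_linear D" using d has_derivative_bounded_linear by blast
  have v0: "v \<noteq> 0" using nc linear_0[OF bounded_linear.linear[OF bl]] by auto
  hence nv: "norm v > 0" by simp
  define \<epsilon> where "\<epsilon> = (norm (D v) - C * norm v) / (2 * norm v)"
  have \<epsilon>: "\<epsilon> > 0" using nc nv by (simp add: \<epsilon>_def)
  obtain \<delta> where \<delta>: "\<delta> > 0" "\<And>y. norm (y - x) < \<delta> \<Longrightarrow> norm (F y - F x - D (y - x)) \<le> \<epsilon> * norm (y - x)"
    using d \<epsilon> unfolding has_derivative_at_alt by blast
  define t where "t = \<delta> / (2 * norm v)"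
  have t: "t > 0" using \<delta> nv by (simp add: t_def)
  have "norm (t *\<^sub>R v) = \<delta>/2" using nv t \<delta>(1) by (simp add: t_def)
  hence "norm ((x + t *\<^sub>R v) - x) < \<delta>" using \<delta> by simp
  from \<delta>(2)[OF this] have a: "norm (F (x + t *\<^sub>R v) - F x - t *\<^sub>R D v) \<le> \<epsilon> * (t * norm v)"
    using t by (simp add: linear_cmul[OF bounded_linear.linear[OF bl]])
  have b: "norm (F (x + t *\<^sub>R v) - F x) \<le> C * (t * norm v)"
    using lipschitz_on_normD[OF L, of "x + t *\<^sub>R v" x] t by simp
  have "norm (t *\<^sub>R D v) \<le> norm (F (x + t *\<^sub>R v) - F x - t *\<^sub>R D v) + norm (F (x + t *\<^sub>R v) - F x)"
    by (rule order_trans[OF _ norm_triangle_ineq4]) (simp add: norm_minus_commute)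
  hence "t * norm (D v) \<le> t * ((\<epsilon> + C) * norm v)" using a b t by (simp add: algebra_simps)
  hence "norm (D v) \<le> (\<epsilon> + C) * norm v" using t by simp
  moreover have "(\<epsilon> + C) * norm v = (norm (D v) + C * norm v) / 2" using nv by (simp add: \<epsilon>_def field_simps)
  ultimately have "norm (D v) \<le> (norm (D v) + C * norm v) / 2" by (rule ord_le_eq_trans)
  hence "norm (D v) \<le> C * norm v" by (simp add: field_simps)
  thus False using nc by blast
qed

lemma hderiv_bound:
  fixes h :: "'x::real_normed_vector \<Rightarrow> 'u::real_normed_vector \<Rightarrow> 'z::real_normed_vector"
  assumes a1: "A1 g h" and L: "Lh-lipschitz_on UNIV (\<lambda>(x, u). h x u)"
  shows "norm (frechet_derivative (\<lambda>x'. h x' u0) (at x) v) \<le> Lh * norm v"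
proof -
  from a1 obtain H' where H': "\<And>p. ((\<lambda>(x, u). h x u) has_derivative blinfun_apply (H' p)) (at p)"
    unfolding A1_def C1_def by blast
  have dp: "((\<lambda>x'. (x', u0)) has_derivative (\<lambda>v. (v, 0))) (at x)"
    by (auto intro!: derivative_eq_intros)
  have hd: "((\<lambda>x'. h x' u0) has_derivative (\<lambda>v. H' (x, u0) (v, 0))) (at x)"
    using has_derivative_compose[OF dp H'[of "(x,u0)"]] by simp
  have eqf: "frechet_derivative (\<lambda>x'. h x' u0) (at x) = (\<lambda>v. H' (x, u0) (v, 0))"
    by (rule sym[OF frechet_derivative_at[OF hd]])
  have eq: "frechet_derivative (\<lambda>x'. h x' u0) (at x) v = H' (x, u0) (v, 0)"
    using fun_cong[OF eqf, of v] by simp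
  have b: "norm (H' (x, u0) (v, 0)) \<le> Lh * norm (v, 0::'u)"
    using deriv_lip_bound[OF H'[of "(x,u0)"] L] .
  have n: "norm (v, 0::'u) = norm v" by (simp add: norm_Pair)
  show ?thesis unfolding eq using b n by (simp only:)
qed



lemma lip2:
  assumes L: "L-lipschitz_on UNIV (\<lambda>(x, u). F x u)"
  shows "norm (F x u - F x' u') \<le> L * (norm (x - x') + norm (u - u'))"
proof -
  have L0: "L \<ge> 0" using lipschitz_on_nonneg[OF L] .
  have "dist ((\<lambda>(x, u). F x u) (x, u)) ((\<lambda>(x, u). F x u) (x', u')) \<le> L * dist (x, u) (x', u')"
    by (rule lipschitz_onD[OF L]) auto
  hence a: "norm (F x u - F x' u') \<le> L * dist (x, u) (x', u')" by (simp add: dist_norm)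
  have "dist (x, u) (x', u') \<le> dist x x' + dist u u'"
    unfolding dist_Pair_Pair by (rule sqrt_sum_squares_le_sum) auto
  hence "L * dist (x, u) (x', u') \<le> L * (norm (x - x') + norm (u - u'))"
    using L0 by (intro mult_left_mono) (auto simp: dist_norm)
  thus ?thesis using a by linarith
qed

lemma lip3:
  assumes L: "L-lipschitz_on UNIV (\<lambda>(x, z, u). F x z u)"
  shows "norm (F x z u - F x' z' u') \<le> L * (norm (x - x') + norm (z - z') + norm (u - u'))"
proof -
  have L0: "L \<ge> 0" using lipschitz_on_nonneg[OF L] .
  have "dist ((\<lambda>(x, z, u). F x z u) (x, z, u)) ((\<lambda>(x, z, u). F x z u) (x', z', u')) \<le> L * dist (x, z, u) (x', z', u')"
    by (rule lipschitz_onD[OF L]) auto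
  hence a: "norm (F x z u - F x' z' u') \<le> L * dist (x, z, u) (x', z', u')" by (simp add: dist_norm)
  have "dist (z, u) (z', u') \<le> dist z z' + dist u u'"
    unfolding dist_Pair_Pair by (rule sqrt_sum_squares_le_sum) auto
  moreover have "dist (x, z, u) (x', z', u') \<le> dist x x' + dist (z, u) (z', u')"
    unfolding dist_Pair_Pair[of x "(z,u)"] by (rule sqrt_sum_squares_le_sum) auto
  ultimately have "dist (x, z, u) (x', z', u') \<le> norm (x - x') + norm (z - z') + norm (u - u')"
    by (simp add: dist_norm)
  hence "L * dist (x, z, u) (x', z', u') \<le> L * (norm (x - x') + norm (z - z') + norm (u - u'))"
    using L0 by (intro mult_left_mono) auto
  thus ?thesis using a by linarith
qed

lemma coef0:
  fixes s A m S :: real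
  assumes "s > 0" "A \<ge> 0" "s * m \<le> S"
  shows "A * m \<le> (A / s) * S"
proof -
  have "(A / s) * (s * m) \<le> (A / s) * S" using assms by (intro mult_left_mono) auto
  moreover have "(A / s) * (s * m) = A * m" using assms(1) by simp
  ultimately show ?thesis by simp
qed

lemma coef:
  fixes s A m S :: real
  assumes "s > 0" "A \<ge> 0" "s * m \<le> S" "m \<ge> 0"
  shows "A * m \<le> (A / s + 1) * S"
proof -
  have "S \<ge> 0" using assms by (smt (verit) mult_nonneg_nonneg)
  hence "(A / s) * S \<le> (A / s + 1) * S" by (simp add: algebra_simps)
  thus ?thesis using coef0[OF assms(1-3)] by linarith
qed

lemma sqrt_lb: "0 \<le> (a::real) \<Longrightarrow> a^2 \<le> X \<Longrightarrow> a \<le> sqrt X"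
  using real_le_rsqrt by blast

lemma norm_lip1: "1-lipschitz_on UNIV (norm :: 'a::real_normed_vector \<Rightarrow> real)"
  unfolding lipschitz_on_def by (auto simp: dist_norm norm_triangle_ineq3)




lemma frac1_pos: "0 \<le> (a::real) \<Longrightarrow> 0 < b \<Longrightarrow> 0 < a / b + 1"
  by (smt (verit) divide_nonneg_pos)

theorem proposition1:
  fixes f :: "real^'nx \<Rightarrow> real^'nz \<Rightarrow> real^'nu \<Rightarrow> real^'nx"
    and g :: "real^'nx \<Rightarrow> real^'nz \<Rightarrow> real^'nu \<Rightarrow> real^'nz"
    and k :: "real^'nx \<Rightarrow> real^'nu"
    and h :: "real^'nx \<Rightarrow> real^'nu \<Rightarrow> real^'nz"
    and P1 :: "real^'nx^'nx" and P2 :: "real^'nz^'nz"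
    and \<epsilon> \<alpha>1bar \<alpha>2 :: real
  assumes eps: "\<epsilon> > 0"
    and lip_f: "glob_lipschitz (\<lambda>(x, z, u). f x z u)"
    and lip_g: "glob_lipschitz (\<lambda>(x, z, u). g x z u)"
    and lip_k: "glob_lipschitz k"
    and a1: "A1 g h"
    and lip_h: "glob_lipschitz (\<lambda>(x, u). h x u)"
    and P1: "sym_pos_def_mat P1" and P2: "sym_pos_def_mat P2"
    and a1pos: "\<alpha>1bar > 0" and a2pos: "\<alpha>2 > 0"
    and Vx_dec: "\<forall>x. frechet_derivative (quadf P1) (at x) (fs_fun f h k x 0)
                    \<le> - \<alpha>1bar * quadf P1 x"
    and Vy_dec: "\<forall>x y e. frechet_derivative (quadf P2) (at y) (gf_fun g h k x y e)
                    \<le> - \<alpha>2 * quadf P2 y"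
  shows "\<exists>\<gamma>1bar \<gamma>2bar. \<gamma>1bar \<ge> 0 \<and> \<gamma>2bar \<ge> 0 \<and>
           (let Vx = quadf P1; Vy = (\<lambda>x y. quadf P2 y);
                \<gamma>1 = (\<lambda>s. \<gamma>1bar * s\<^sup>2); \<gamma>2 = (\<lambda>s. \<gamma>2bar * s\<^sup>2) in
              A2 f h k Vx (\<alpha>1bar / 2) \<gamma>1 \<and> A3 g h k Vy \<and> A4 f h k Vx Vy \<gamma>1 \<gamma>2
              \<and> A5 h k Vy \<gamma>1 \<and> A6 f h k Vx Vy)"
proof -
  obtain Lf where Lf: "Lf-lipschitz_on UNIV (\<lambda>(x, z, u). f x z u)" using lip_f glob_lipschitz_def by blast
  obtain Lk where Lk: "Lk-lipschitz_on UNIV k" using lip_k glob_lipschitz_def by blast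
  obtain Lh where Lh: "Lh-lipschitz_on UNIV (\<lambda>(x, u). h x u)" using lip_h glob_lipschitz_def by blast
  have Lf0: "Lf \<ge> 0" using lipschitz_on_nonneg[OF Lf] .
  have Lk0: "Lk \<ge> 0" using lipschitz_on_nonneg[OF Lk] .
  have Lh0: "Lh \<ge> 0" using lipschitz_on_nonneg[OF Lh] .
  have fL: "\<And>x z u x' z' u'. norm (f x z u - f x' z' u') \<le> Lf * (norm (x - x') + norm (z - z') + norm (u - u'))"
    using lip3[OF Lf] .
  have hL: "\<And>x u x' u'. norm (h x u - h x' u') \<le> Lh * (norm (x - x') + norm (u - u'))"
    using lip2[OF Lh] .
  have kL: "\<And>a b. norm (k a - k b) \<le> Lk * norm (a - b)"
    using lipschitz_on_normD[OF Lk] by blast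
  obtain c1 where c1: "c1 > 0" "\<And>x. c1 * (norm x)^2 \<le> quadf P1 x" using quadf_lower[OF P1] by blast
  obtain c2 where c2: "c2 > 0" "\<And>x. c2 * (norm x)^2 \<le> quadf P2 x" using quadf_lower[OF P2] by blast
  obtain B1 where B1: "B1 > 0" "\<And>v w. \<bar>v \<bullet> (P1 *v w)\<bar> \<le> B1 * norm v * norm w" "\<And>v. \<bar>quadf P1 v\<bar> \<le> B1 * (norm v)^2"
    using quadf_diffbound[of P1] by blast
  obtain B2 where B2: "B2 > 0" "\<And>v w. \<bar>v \<bullet> (P2 *v w)\<bar> \<le> B2 * norm v * norm w" "\<And>v. \<bar>quadf P2 v\<bar> \<le> B2 * (norm v)^2"
    using quadf_diffbound[of P2] by blast
  have q1pos: "\<And>x. quadf P1 x \<ge> 0" using c1 by (smt (verit) mult_nonneg_nonneg zero_le_power2)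
  have q2pos: "\<And>x. quadf P2 x \<ge> 0" using c2 by (smt (verit) mult_nonneg_nonneg zero_le_power2)
  have D1: "\<bar>frechet_derivative (quadf P1) (at x) v\<bar> \<le> 2 * B1 * norm x * norm v" for x v
  proof -
    have "\<bar>v \<bullet> (P1 *v x)\<bar> \<le> B1 * norm v * norm x" "\<bar>x \<bullet> (P1 *v v)\<bar> \<le> B1 * norm x * norm v" using B1 by auto
    moreover have "\<bar>v \<bullet> (P1 *v x) + x \<bullet> (P1 *v v)\<bar> \<le> \<bar>v \<bullet> (P1 *v x)\<bar> + \<bar>x \<bullet> (P1 *v v)\<bar>" by (rule abs_triangle_ineq)
    moreover have "B1 * norm v * norm x = B1 * norm x * norm v" by simp
    ultimately show ?thesis unfolding fd_quadf by linarith
  qed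
  have D2: "\<bar>frechet_derivative (quadf P2) (at x) v\<bar> \<le> 2 * B2 * norm x * norm v" for x v
  proof -
    have "\<bar>v \<bullet> (P2 *v x)\<bar> \<le> B2 * norm v * norm x" "\<bar>x \<bullet> (P2 *v v)\<bar> \<le> B2 * norm x * norm v" using B2 by auto
    moreover have "\<bar>v \<bullet> (P2 *v x) + x \<bullet> (P2 *v v)\<bar> \<le> \<bar>v \<bullet> (P2 *v x)\<bar> + \<bar>x \<bullet> (P2 *v v)\<bar>" by (rule abs_triangle_ineq)
    moreover have "B2 * norm v * norm x = B2 * norm x * norm v" by simp
    ultimately show ?thesis unfolding fd_quadf by linarith
  qed
  have D1add: "frechet_derivative (quadf P1) (at x) (a + b) = frechet_derivative (quadf P1) (at x) a + frechet_derivative (quadf P1) (at x) b" for x a b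
    unfolding fd_quadf by (simp add: inner_add_left inner_add_right matrix_vector_right_distrib)
  define K1 where "K1 = Lf * (Lh * Lk + Lk)"
  define K0 where "K0 = Lf * (1 + Lh * (1 + Lk) + Lk)"
  have K1pos: "K1 \<ge> 0" unfolding K1_def using Lf0 Lh0 Lk0 by simp
  have K0pos: "K0 \<ge> 0" unfolding K0_def using Lf0 Lh0 Lk0 by simp
  have dk: "norm (k (x + e) - k x) \<le> Lk * norm e" for x e using kL[of "x + e" x] by simp
  have dh: "norm (h x (k (x + e)) - h x (k x)) \<le> Lh * Lk * norm e" for x e
  proof -
    have "norm (h x (k (x + e)) - h x (k x)) \<le> Lh * (norm (x - x) + norm (k (x + e) - k x))" by (rule hL)
    also have "\<dots> \<le> Lh * (Lk * norm e)" using dk[of x e] Lh0 by (intro mult_left_mono) auto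
    finally show ?thesis by (simp add: mult.assoc)
  qed
  have fs_e: "norm (fs_fun f h k x e - fs_fun f h k x 0) \<le> K1 * norm e" for x e
  proof -
    have "norm (fs_fun f h k x e - fs_fun f h k x 0) \<le> Lf * (norm (x - x) + norm (h x (k (x + e)) - h x (k x)) + norm (k (x + e) - k x))"
      unfolding fs_fun_def using fL[of x "h x (k (x+e))" "k (x+e)" x "h x (k x)" "k x"] by simp
    also have "\<dots> \<le> Lf * (Lh * Lk * norm e + Lk * norm e)" using dk[of x e] dh[of x e] Lf0 by (intro mult_left_mono) auto
    finally show ?thesis by (simp add: K1_def algebra_simps)
  qed
  have fx_fs: "norm (fx_fun f h k x y e - fs_fun f h k x e) \<le> Lf * norm y" for x y e
  proof -
    have "norm (fx_fun f h k x y e - fs_fun f h k x e) \<le> Lf * (norm (x - x) + norm (y + h x (k (x + e)) - h x (k (x + e))) + norm (k (x + e) - k (x + e)))"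
      unfolding fs_fun_def fx_fun_def by (rule fL)
    thus ?thesis by simp
  qed
  have fs0: "norm (fs_fun f h k x 0 - fs_fun f h k 0 0) \<le> K0 * norm x" for x
  proof -
    have a1: "norm (fs_fun f h k x 0 - fs_fun f h k 0 0) \<le> Lf * (norm (x - 0) + norm (h x (k x) - h 0 (k 0)) + norm (k x - k 0))"
      unfolding fs_fun_def using fL[of x "h x (k x)" "k x" 0 "h 0 (k 0)" "k 0"] by simp
    have a3: "norm (k x - k 0) \<le> Lk * norm x" using kL[of x 0] by simp
    have a2: "norm (h x (k x) - h 0 (k 0)) \<le> Lh * (norm x + Lk * norm x)"
    proof -
      have "norm (h x (k x) - h 0 (k 0)) \<le> Lh * (norm (x - 0) + norm (k x - k 0))" by (rule hL)
      also have "\<dots> \<le> Lh * (norm x + Lk * norm x)" using kL[of x 0] Lh0 by (intro mult_left_mono) auto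
      finally show ?thesis .
    qed
    have "norm (fs_fun f h k x 0 - fs_fun f h k 0 0) \<le> Lf * (norm x + Lh * (norm x + Lk * norm x) + Lk * norm x)"
    proof -
      note a = a1 a2 a3
      have "norm (x - 0) + norm (h x (k x) - h 0 (k 0)) + norm (k x - k 0) \<le> norm x + Lh * (norm x + Lk * norm x) + Lk * norm x"
        using a(2,3) by simp
      hence "Lf * (norm (x - 0) + norm (h x (k x) - h 0 (k 0)) + norm (k x - k 0)) \<le> Lf * (norm x + Lh * (norm x + Lk * norm x) + Lk * norm x)"
        using Lf0 by (rule mult_left_mono)
      thus ?thesis using a(1) by linarith
    qed
    thus ?thesis by (simp add: K0_def algebra_simps)
  qed
  have fs00: "fs_fun f h k 0 0 = 0"
  proof (rule ccontr)
    define c where "c = fs_fun f h k 0 0"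
    assume "fs_fun f h k 0 0 \<noteq> 0"
    hence cn: "norm c > 0" by (simp add: c_def)
    define t where "t = c1 / (2 * (B1 * K0 + 1))"
    have BK: "B1 * K0 \<ge> 0" using B1(1) K0pos by simp
    have t0: "t > 0" using c1(1) BK by (simp add: t_def)
    have tB: "B1 * K0 * t \<le> c1 / 2"
      unfolding t_def using c1(1) BK by (simp add: field_simps)
    define x where "x = t *\<^sub>R c"
    define r where "r = fs_fun f h k x 0 - c"
    have nx: "norm x = t * norm c" using t0 by (simp add: x_def)
    have "norm r \<le> K0 * norm x" using fs0[of x] by (simp add: r_def c_def)
    hence r: "norm r \<le> K0 * (t * norm c)" using nx by simp
    have Fx: "fs_fun f h k x 0 = c + r" by (simp add: r_def)
    have dec: "frechet_derivative (quadf P1) (at x) (c + r) \<le> 0"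
    proof -
      have "frechet_derivative (quadf P1) (at x) (c + r) \<le> - \<alpha>1bar * quadf P1 x" using Vx_dec Fx by metis
      moreover have "\<alpha>1bar * quadf P1 x \<ge> 0" using a1pos q1pos[of x] by simp
      ultimately show ?thesis by linarith
    qed
    have ex: "frechet_derivative (quadf P1) (at x) (c + r) = t * (2 * quadf P1 c + (r \<bullet> (P1 *v c) + c \<bullet> (P1 *v r)))"
      unfolding fd_quadf x_def quadf_def
      by (simp add: matrix_vector_mult_scaleR inner_add_left inner_add_right matrix_vector_right_distrib algebra_simps)
    have bd: "\<bar>r \<bullet> (P1 *v c) + c \<bullet> (P1 *v r)\<bar> \<le> 2 * B1 * norm r * norm c"
    proof -
      have "\<bar>r \<bullet> (P1 *v c)\<bar> \<le> B1 * norm r * norm c" "\<bar>c \<bullet> (P1 *v r)\<bar> \<le> B1 * norm c * norm r" using B1 by auto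
      moreover have "\<bar>r \<bullet> (P1 *v c) + c \<bullet> (P1 *v r)\<bar> \<le> \<bar>r \<bullet> (P1 *v c)\<bar> + \<bar>c \<bullet> (P1 *v r)\<bar>" by (rule abs_triangle_ineq)
      moreover have "B1 * norm c * norm r = B1 * norm r * norm c" by simp
      ultimately show ?thesis by linarith
    qed
    have s1: "2 * B1 * norm r * norm c \<le> 2 * B1 * (K0 * (t * norm c)) * norm c"
      using r B1(1) by (intro mult_right_mono mult_left_mono) auto
    have s2: "2 * B1 * (K0 * (t * norm c)) * norm c = 2 * (B1 * K0 * t) * (norm c)^2"
      by (simp add: power2_eq_square mult_ac)
    have s3: "2 * (B1 * K0 * t) * (norm c)^2 \<le> 2 * (c1 / 2) * (norm c)^2"
      using tB by (intro mult_right_mono mult_left_mono) auto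
    have s4: "2 * (c1 / 2) * (norm c)^2 = c1 * (norm c)^2" by simp
    have qc: "c1 * (norm c)^2 \<le> quadf P1 c" by (rule c1(2))
    have pos: "c1 * (norm c)^2 > 0" using c1(1) cn by simp
    have "2 * quadf P1 c + (r \<bullet> (P1 *v c) + c \<bullet> (P1 *v r)) > 0"
      using bd s1 s2 s3 s4 qc pos by linarith
    hence "frechet_derivative (quadf P1) (at x) (c + r) > 0" unfolding ex using t0 by simp
    thus False using dec by linarith
  qed
  have fx_bd: "norm (fx_fun f h k x y e) \<le> K0 * norm x + K1 * norm e + Lf * norm y" for x y e
  proof -
    have eq: "fx_fun f h k x y e = (fx_fun f h k x y e - fs_fun f h k x e) + (fs_fun f h k x e - fs_fun f h k x 0) + (fs_fun f h k x 0 - fs_fun f h k 0 0)"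
      using fs00 by simp
    have t: "norm (a + b + c) \<le> norm a + norm b + norm c" for a b c :: "real^'nx"
      by (rule order_trans[OF norm_triangle_ineq add_right_mono[OF norm_triangle_ineq]])
    have "norm (fx_fun f h k x y e) \<le> norm (fx_fun f h k x y e - fs_fun f h k x e) + norm (fs_fun f h k x e - fs_fun f h k x 0) + norm (fs_fun f h k x 0 - fs_fun f h k 0 0)"
      unfolding arg_cong[OF eq, of norm] by (rule t)
    thus ?thesis using fx_fs[of x y e] fs_e[of x e] fs0[of x] by linarith
  qed
  define g1 where "g1 = 2 * B1^2 * K1^2 / (\<alpha>1bar * c1) + 1"
  define g2 where "g2 = B2 * Lh * K1 + 1"
  have g1pos: "g1 > 0" unfolding g1_def using a1pos c1(1) by (intro frac1_pos) auto
  have g2pos: "g2 > 0" unfolding g2_def using B2(1) Lh0 K1pos by (smt (verit) mult_nonneg_nonneg)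
  have q1up: "quadf P1 x \<le> B1 * (norm x)^2" for x using B1(3)[of x] by linarith
  have q2up: "quadf P2 x \<le> B2 * (norm x)^2" for x using B2(3)[of x] by linarith
  have sq1: "sqrt c1 * norm x \<le> sqrt (quadf P1 x)" for x
    using c1(2)[of x] c1(1) by (intro sqrt_lb) (auto simp: power_mult_distrib)
  have sq2: "sqrt c2 * norm x \<le> sqrt (quadf P2 x)" for x
    using c2(2)[of x] c2(1) by (intro sqrt_lb) (auto simp: power_mult_distrib)
  define s12 where "s12 = sqrt (c1 * c2)"
  have s12pos: "s12 > 0" unfolding s12_def using c1(1) c2(1) by simp
  have sq12: "s12 * (norm x * norm y) \<le> sqrt (quadf P1 x * quadf P2 y)" for x y
  proof (rule sqrt_lb)
    show "0 \<le> s12 * (norm x * norm y)" using s12pos by simp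
    have "(s12 * (norm x * norm y))^2 = (c1 * (norm x)^2) * (c2 * (norm y)^2)"
      unfolding s12_def using c1(1) c2(1) by (simp add: power_mult_distrib)
    also have "\<dots> \<le> quadf P1 x * quadf P2 y"
      using c1 c2 q1pos[of x] by (intro mult_mono) auto
    finally show "(s12 * (norm x * norm y))^2 \<le> quadf P1 x * quadf P2 y" .
  qed
  have A2: "A2 f h k (quadf P1) (\<alpha>1bar / 2) (\<lambda>s. g1 * s\<^sup>2)"
  proof -
    have bnds: "\<exists>la ua. Kinf la \<and> Kinf ua \<and> (\<forall>x. la (norm x) \<le> quadf P1 x \<and> quadf P1 x \<le> ua (norm x))"
      using Kinf_sq[OF c1(1)] Kinf_sq[OF B1(1)] c1(2) q1up by blast
    have der: "frechet_derivative (quadf P1) (at x) (fs_fun f h k x e) \<le> - (\<alpha>1bar / 2) * quadf P1 x + g1 * (norm e)\<^sup>2" for x e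
    proof -
      define r where "r = fs_fun f h k x e - fs_fun f h k x 0"
      have sp: "fs_fun f h k x e = fs_fun f h k x 0 + r" by (simp add: r_def)
      have a: "frechet_derivative (quadf P1) (at x) (fs_fun f h k x 0) \<le> - \<alpha>1bar * quadf P1 x" using Vx_dec by blast
      have b0: "frechet_derivative (quadf P1) (at x) r \<le> 2 * B1 * norm x * norm r" using D1[of x r] by linarith
      have b1: "2 * B1 * norm x * norm r \<le> 2 * B1 * norm x * (K1 * norm e)"
        using fs_e[of x e] B1(1) unfolding r_def[symmetric] by (intro mult_left_mono) auto
      have b2: "2 * B1 * norm x * (K1 * norm e) = norm x * (2 * B1 * K1 * norm e)" by (simp add: mult_ac)
      have sp0: "\<alpha>1bar * c1 / 2 > 0" using a1pos c1(1) by simp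
      have b3: "norm x * (2 * B1 * K1 * norm e) \<le> (\<alpha>1bar * c1 / 2) * (norm x)^2 + (2 * B1 * K1 * norm e)^2 / (4 * (\<alpha>1bar * c1 / 2))"
        by (rule amgm[OF sp0])
      have b4: "(2 * B1 * K1 * norm e)^2 / (4 * (\<alpha>1bar * c1 / 2)) = (2 * B1^2 * K1^2 / (\<alpha>1bar * c1)) * (norm e)^2"
        using a1pos c1(1) by (simp add: field_simps power_mult_distrib)
      have b5: "(2 * B1^2 * K1^2 / (\<alpha>1bar * c1)) * (norm e)^2 \<le> g1 * (norm e)^2"
        unfolding g1_def by (intro mult_right_mono) auto
      have b6: "(\<alpha>1bar * c1 / 2) * (norm x)^2 \<le> (\<alpha>1bar / 2) * quadf P1 x"
      proof -
        have "(\<alpha>1bar / 2) * (c1 * (norm x)^2) \<le> (\<alpha>1bar / 2) * quadf P1 x" using a1pos c1(2) by (intro mult_left_mono) auto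
        thus ?thesis by (simp add: mult_ac)
      qed
      show ?thesis unfolding sp D1add using a b0 b1 b2 b3 b4 b5 b6 by linarith
    qed
    show ?thesis unfolding A2_def using C1_quadf bnds Kinf_sq[OF g1pos] C1_sq a1pos der by auto
  qed
  have A3: "A3 g h k (\<lambda>x y. quadf P2 y)"
  proof -
    have bnds: "\<exists>la ua \<alpha>2. Kinf la \<and> Kinf ua \<and> \<alpha>2 > 0 \<and> (\<forall>x y. la (norm y) \<le> quadf P2 y \<and> quadf P2 y \<le> ua (norm y))
        \<and> (\<forall>x y e. frechet_derivative (quadf P2) (at y) (gf_fun g h k x y e) \<le> - \<alpha>2 * quadf P2 y)"
      using Kinf_sq[OF c2(1)] Kinf_sq[OF B2(1)] c2(2) q2up a2pos Vy_dec by blast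
    show ?thesis unfolding A3_def using C1_quadf_snd bnds by simp
  qed
  have A4: "A4 f h k (quadf P1) (\<lambda>x y. quadf P2 y) (\<lambda>s. g1 * s\<^sup>2) (\<lambda>s. g2 * s\<^sup>2)"
  proof -
    define \<beta>1 where "\<beta>1 = 2 * B1 * Lf / s12 + 1"
    define \<beta>2 where "\<beta>2 = 2 * B2 * Lh * K0 / s12 + 1"
    define \<beta>3 where "\<beta>3 = (2 * B2 * Lh * Lf + B2 * Lh * K1) / c2 + 1"
    have pos: "\<beta>1 > 0" "\<beta>2 > 0" "\<beta>3 > 0"
      unfolding \<beta>1_def \<beta>2_def \<beta>3_def using s12pos B1(1) B2(1) Lf0 Lh0 K0pos K1pos c2(1)
      by (auto intro!: frac1_pos)
    have p1: "frechet_derivative (quadf P1) (at x) (fx_fun f h k x y e - fs_fun f h k x e) \<le> \<beta>1 * sqrt (quadf P1 x * quadf P2 y)" for x y e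
    proof -
      have "frechet_derivative (quadf P1) (at x) (fx_fun f h k x y e - fs_fun f h k x e) \<le> 2 * B1 * norm x * norm (fx_fun f h k x y e - fs_fun f h k x e)"
        using D1 by (smt (verit))
      also have "\<dots> \<le> 2 * B1 * norm x * (Lf * norm y)" using fx_fs B1(1) by (intro mult_left_mono) auto
      also have "\<dots> = (2 * B1 * Lf) * (norm x * norm y)" by (simp add: mult_ac)
      also have "\<dots> \<le> \<beta>1 * sqrt (quadf P1 x * quadf P2 y)" unfolding \<beta>1_def
        by (rule coef[OF s12pos _ sq12]) (use B1(1) Lf0 in auto)
      finally show ?thesis .
    qed
    have p2: "frechet_derivative (\<lambda>x'. quadf P2 y) (at x) (fx_fun f h k x y e)
          - frechet_derivative (quadf P2) (at y)
              (frechet_derivative (\<lambda>x'. h x' (k (x + e))) (at x) (fx_fun f h k x y e))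
            \<le> \<beta>2 * sqrt (quadf P1 x * quadf P2 y) + \<beta>3 * quadf P2 y + g2 * (norm e)\<^sup>2" for x y e
    proof -
      define w where "w = frechet_derivative (\<lambda>x'. h x' (k (x + e))) (at x) (fx_fun f h k x y e)"
      have z: "frechet_derivative (\<lambda>x'. quadf P2 y) (at x) = (\<lambda>_. 0)"
        by (rule sym[OF frechet_derivative_at[OF has_derivative_const]])
      have nw: "norm w \<le> Lh * (K0 * norm x + K1 * norm e + Lf * norm y)"
      proof -
        have "norm w \<le> Lh * norm (fx_fun f h k x y e)" unfolding w_def by (rule hderiv_bound[OF a1 Lh])
        also have "\<dots> \<le> Lh * (K0 * norm x + K1 * norm e + Lf * norm y)" using fx_bd Lh0 by (intro mult_left_mono) auto
        finally show ?thesis .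
      qed
      have a: "- frechet_derivative (quadf P2) (at y) w \<le> 2 * B2 * norm y * norm w" using D2[of y w] by linarith
      have b: "2 * B2 * norm y * norm w \<le> 2 * B2 * norm y * (Lh * (K0 * norm x + K1 * norm e + Lf * norm y))"
        using nw B2(1) by (intro mult_left_mono) auto
      have c: "2 * B2 * norm y * (Lh * (K0 * norm x + K1 * norm e + Lf * norm y))
          = (2 * B2 * Lh * K0) * (norm x * norm y) + (2 * B2 * Lh * K1) * (norm y * norm e) + (2 * B2 * Lh * Lf) * (norm y)^2"
        by (simp add: algebra_simps power2_eq_square)
      have half: "(1::real) / 2 > 0" by simp
      have d0: "norm y * norm e \<le> 1 / 2 * (norm y)^2 + (norm e)^2 / (4 * (1 / 2))" by (rule amgm[OF half])
      have d: "(2 * B2 * Lh * K1) * (norm y * norm e) \<le> (2 * B2 * Lh * K1) * (1 / 2 * (norm y)^2 + (norm e)^2 / (4 * (1 / 2)))"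
        using d0 B2(1) Lh0 K1pos by (intro mult_left_mono) auto
      have d2: "(2 * B2 * Lh * K1) * (1 / 2 * (norm y)^2 + (norm e)^2 / (4 * (1 / 2))) = (B2 * Lh * K1) * (norm y)^2 + (B2 * Lh * K1) * (norm e)^2"
        by (simp add: algebra_simps)
      have e1: "(2 * B2 * Lh * K0) * (norm x * norm y) \<le> \<beta>2 * sqrt (quadf P1 x * quadf P2 y)" unfolding \<beta>2_def
        by (rule coef[OF s12pos _ sq12]) (use B2(1) Lh0 K0pos in auto)
      have e2: "(2 * B2 * Lh * Lf + B2 * Lh * K1) * (norm y)^2 \<le> \<beta>3 * quadf P2 y" unfolding \<beta>3_def
        by (rule coef[OF c2(1) _ c2(2)]) (use B2(1) Lh0 K1pos Lf0 in auto)
      have e3: "(B2 * Lh * K1) * (norm e)^2 \<le> g2 * (norm e)^2" unfolding g2_def by (intro mult_right_mono) auto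
      have e4: "(2 * B2 * Lh * Lf + B2 * Lh * K1) * (norm y)^2 = (2 * B2 * Lh * Lf) * (norm y)^2 + (B2 * Lh * K1) * (norm y)^2"
        by (simp add: algebra_simps)
      show ?thesis unfolding z w_def[symmetric] using a b c d d2 e1 e2 e3 e4 by linarith
    qed
    have inv: "(\<lambda>s. g2 * s\<^sup>2) (inv_into {0..} (\<lambda>s. g1 * s\<^sup>2) s) \<le> (g2 / g1) * s" if s: "s \<ge> 0" for s
    proof -
      have "strict_mono_on {0..} (\<lambda>s. g1 * s\<^sup>2)" using Kinf_sq[OF g1pos] unfolding Kinf_def by blast
      hence inj: "inj_on (\<lambda>s. g1 * s\<^sup>2) {0..}" by (rule strict_mono_on_imp_inj_on)
      have "inv_into {0..} (\<lambda>s. g1 * s\<^sup>2) s = sqrt (s / g1)"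
        by (rule inv_into_f_eq[OF inj]) (use s g1pos in auto)
      thus ?thesis using s g1pos by simp
    qed
    have L: "\<exists>L>0. \<forall>s\<ge>0. (\<lambda>s. g2 * s\<^sup>2) (inv_into {0..} (\<lambda>s. g1 * s\<^sup>2) s) \<le> L * s"
      using inv g1pos g2pos by (intro exI[of _ "g2 / g1"]) auto
    show ?thesis unfolding A4_def using Kinf_sq[OF g2pos] pos p1 p2 L by blast
  qed
  have A5: "A5 h k (\<lambda>x y. quadf P2 y) (\<lambda>s. g1 * s\<^sup>2)"
  proof -
    define sg where "sg = sqrt (g1 * c2)"
    have sgpos: "sg > 0" unfolding sg_def using g1pos c2(1) by simp
    define l1 where "l1 = B2 * (Lh * Lk)^2 / g1 + 1"
    define l2 where "l2 = 2 * B2 * (Lh * Lk) / sg + 1"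
    have lpos: "l1 > 0" "l2 > 0" unfolding l1_def l2_def using B2(1) g1pos sgpos Lh0 Lk0
      by (auto intro!: frac1_pos)
    have main: "quadf P2 (hy_fun h k x y e) \<le> quadf P2 y + l1 * (g1 * (norm e)\<^sup>2) + l2 * sqrt (g1 * (norm e)\<^sup>2 * quadf P2 y)" for x y e
    proof -
      define d where "d = h x (k (x + e)) - h x (k x)"
      have nd: "norm d \<le> Lh * Lk * norm e" unfolding d_def by (rule dh)
      have hy: "hy_fun h k x y e = y + d" by (simp add: hy_fun_def d_def)
      have ex: "quadf P2 (y + d) = quadf P2 y + (y \<bullet> (P2 *v d) + d \<bullet> (P2 *v y)) + quadf P2 d"
        unfolding quadf_def by (simp add: matrix_vector_right_distrib inner_add_left inner_add_right)
      have cr: "y \<bullet> (P2 *v d) + d \<bullet> (P2 *v y) \<le> 2 * B2 * norm y * norm d"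
      proof -
        have "\<bar>y \<bullet> (P2 *v d)\<bar> \<le> B2 * norm y * norm d" "\<bar>d \<bullet> (P2 *v y)\<bar> \<le> B2 * norm d * norm y" using B2 by auto
        moreover have "B2 * norm d * norm y = B2 * norm y * norm d" by simp
        ultimately show ?thesis by linarith
      qed
      have cr2: "2 * B2 * norm y * norm d \<le> 2 * B2 * norm y * (Lh * Lk * norm e)"
        using nd B2(1) by (intro mult_left_mono) auto
      have cr3: "2 * B2 * norm y * (Lh * Lk * norm e) = (2 * B2 * (Lh * Lk)) * (norm e * norm y)" by (simp add: mult_ac)
      have sqb: "sg * (norm e * norm y) \<le> sqrt (g1 * (norm e)\<^sup>2 * quadf P2 y)"
      proof (rule sqrt_lb)
        show "0 \<le> sg * (norm e * norm y)" using sgpos by simp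
        have "(sg * (norm e * norm y))^2 = g1 * (norm e)\<^sup>2 * (c2 * (norm y)^2)"
          unfolding sg_def using g1pos c2(1) by (simp add: power_mult_distrib mult_ac)
        also have "\<dots> \<le> g1 * (norm e)\<^sup>2 * quadf P2 y" using c2(2) g1pos by (intro mult_left_mono) auto
        finally show "(sg * (norm e * norm y))^2 \<le> g1 * (norm e)\<^sup>2 * quadf P2 y" .
      qed
      have cr4: "(2 * B2 * (Lh * Lk)) * (norm e * norm y) \<le> l2 * sqrt (g1 * (norm e)\<^sup>2 * quadf P2 y)"
        unfolding l2_def by (rule coef[OF sgpos _ sqb]) (use B2(1) Lh0 Lk0 in auto)
      have qd: "quadf P2 d \<le> B2 * (norm d)^2" by (rule q2up)
      have qd2: "B2 * (norm d)^2 \<le> B2 * (Lh * Lk * norm e)^2"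
        using nd B2(1) by (intro mult_left_mono power_mono) auto
      have qd3: "B2 * (Lh * Lk * norm e)^2 = (B2 * (Lh * Lk)^2) * (norm e)^2" by (simp add: power_mult_distrib)
      have qd4: "(B2 * (Lh * Lk)^2) * (norm e)^2 \<le> l1 * (g1 * (norm e)\<^sup>2)" unfolding l1_def
        by (rule coef[OF g1pos]) (use B2(1) in auto)
      show ?thesis unfolding hy ex using cr cr2 cr3 cr4 qd qd2 qd3 qd4 by linarith
    qed
    show ?thesis unfolding A5_def using lpos main by blast
  qed
  have A6: "A6 f h k (quadf P1) (\<lambda>x y. quadf P2 y)"
  proof -
    define N where "N = K0 / sqrt c1 + Lf / sqrt c2"
    have Npos: "N \<ge> 0" unfolding N_def using K0pos Lf0 c1(1) c2(1) by simp
    have main: "D (- fx_fun f h k x y e) \<le> K1 * norm e + N * (sqrt (quadf P1 x) + sqrt (quadf P2 y))"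
      if hd: "(norm has_derivative D) (at e)" for x y e D
    proof -
      have "norm (D (- fx_fun f h k x y e)) \<le> 1 * norm (- fx_fun f h k x y e)"
        by (rule deriv_lip_bound[OF hd norm_lip1])
      hence a: "D (- fx_fun f h k x y e) \<le> K0 * norm x + K1 * norm e + Lf * norm y"
        using fx_bd[of x y e] by simp
      have c1p: "sqrt c1 > 0" "sqrt c2 > 0" using c1(1) c2(1) by auto
      have b1: "K0 * norm x \<le> (K0 / sqrt c1) * sqrt (quadf P1 x)" by (rule coef0[OF c1p(1) K0pos sq1])
      have b2: "Lf * norm y \<le> (Lf / sqrt c2) * sqrt (quadf P2 y)" by (rule coef0[OF c1p(2) Lf0 sq2])
      have b3: "0 \<le> (K0 / sqrt c1) * sqrt (quadf P2 y)" "0 \<le> (Lf / sqrt c2) * sqrt (quadf P1 x)"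
        using K0pos Lf0 c1p q1pos[of x] q2pos[of y] by auto
      have b4: "N * (sqrt (quadf P1 x) + sqrt (quadf P2 y)) = (K0 / sqrt c1) * sqrt (quadf P1 x) + (K0 / sqrt c1) * sqrt (quadf P2 y)
         + (Lf / sqrt c2) * sqrt (quadf P1 x) + (Lf / sqrt c2) * sqrt (quadf P2 y)"
        unfolding N_def by (simp add: algebra_simps)
      show ?thesis using a b1 b2 b3 b4 by linarith
    qed
    show ?thesis unfolding A6_def using K1pos Npos main by blast
  qed
  show ?thesis
    apply (rule exI[of _ g1], rule exI[of _ g2])
    using g1pos g2pos A2 A3 A4 A5 A6 by (simp add: Let_def)
qed

end
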